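(* Fix $\theta$ with $1\le\theta\le 2.13$. For $r\in[4.999,5]$ let $q_r(x)=1-(r-\theta)x+(r-2\theta)x^2+\theta x^3$ and let $\gamma(r)$ be the unique root of $q_r$ in the interval $(0,0.56)$. Then $\gamma(r)$ is strictly decreasing in $r$ on $[4.999,5]$, and so is $\frac{1}{1-\gamma(r)}-\theta$.
   Context: For such $r,\theta$, the polynomial $q_r$ has exactly one root in $(0,0.56)$ and one root in $(0.56,1)$, and one root less than $-1$. *)

theory Defs
  imports Complex_Main
begin

definition qpoly :: "real \<Rightarrow> real \<Rightarrow> real \<Rightarrow> real" where
  "qpoly \<theta> r x = 1 - (r - \<theta>) * x + (r - 2 * \<theta>) * x ^ 2 + \<theta> * x ^ 3"

definition gamma :: "real \<Rightarrow> real \<Rightarrow> real" where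
  "gamma \<theta> r = (THE x. x \<in> {0<..<0.56} \<and> qpoly \<theta> r x = 0)"

end

theory Submission
  imports Defs
begin

lemma conv_id:
  "(c-b)*qpoly t r a + (b-a)*qpoly t r c - (c-a)*qpoly t r b
   = (c-a)*(c-b)*(b-a)*((r-2*t) + t*(a+b+c))"
  unfolding qpoly_def by (simp add: algebra_simps power2_eq_square power3_eq_cube)

lemma q056: "1 \<le> t \<Longrightarrow> t \<le> 2.13 \<Longrightarrow> 4.999 \<le> r \<Longrightarrow> r \<le> 5 \<Longrightarrow> qpoly t r 0.56 < 0"
  unfolding qpoly_def by (simp add: power2_eq_square power3_eq_cube field_simps)

lemma uniq:
  assumes "1 \<le> t" "t \<le> 2.13" "4.999 \<le> r" "r \<le> 5"
    and "a \<in> {0<..<0.56}" "b \<in> {0<..<0.56}" "qpoly t r a = 0" "qpoly t r b = 0"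
  shows "a = b"
proof (rule ccontr)
  assume ne: "a \<noteq> b"
  have key: "\<And>a b. a \<in> {0<..<0.56} \<Longrightarrow> b \<in> {0<..<0.56} \<Longrightarrow> qpoly t r a = 0 \<Longrightarrow> qpoly t r b = 0 \<Longrightarrow> a < b \<Longrightarrow> False"
  proof -
    fix a b :: real
    assume a: "a \<in> {0<..<0.56}" and b: "b \<in> {0<..<0.56}" and qa: "qpoly t r a = 0"
      and qb: "qpoly t r b = 0" and ab: "a < b"
    have pos: "(0.56-a)*(0.56-b)*(b-a)*((r-2*t) + t*(a+b+0.56)) > 0"
      using a b ab assms(1-4) by (intro mult_pos_pos) (auto intro: add_pos_nonneg)
    have "(0.56-b)*qpoly t r a + (b-a)*qpoly t r 0.56 - (0.56-a)*qpoly t r b > 0"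
      using conv_id[of "0.56" b t r a] pos by simp
    moreover have "(b-a)*qpoly t r 0.56 < 0"
      using q056[OF assms(1-4)] ab by (simp add: mult_pos_neg)
    ultimately show False using qa qb by simp
  qed
  show False
  proof (cases "a < b")
    case True then show ?thesis using key assms by blast
  next
    case False then have "b < a" using ne by simp
    then show ?thesis using key assms by blast
  qed
qed

lemma cont_q: "continuous_on S (qpoly t r)"
  unfolding qpoly_def by (intro continuous_intros)

lemma root_below:
  assumes "1 \<le> t" "t \<le> 2.13" "4.999 \<le> r" "r \<le> 5"
    and "0 < y" "y \<le> 0.56" "qpoly t r y < 0"
  shows "\<exists>x. x \<in> {0<..<y} \<and> qpoly t r x = 0"
proof -
  have q0: "qpoly t r 0 = 1" unfolding qpoly_def by simp
  obtain x where x: "0 \<le> x" "x \<le> y" "qpoly t r x = 0"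
    using IVT2'[of "qpoly t r" y 0 0] cont_q assms q0 by force
  have "x \<noteq> 0" using x q0 by auto
  moreover have "x \<noteq> y" using x assms by auto
  ultimately show ?thesis using x by (intro exI[of _ x]) auto
qed

lemma gamma_prop:
  assumes "1 \<le> t" "t \<le> 2.13" "4.999 \<le> r" "r \<le> 5"
  shows "gamma t r \<in> {0<..<0.56} \<and> qpoly t r (gamma t r) = 0"
proof -
  obtain x where x: "x \<in> {0<..<0.56}" "qpoly t r x = 0"
    using root_below[OF assms, of "0.56"] q056[OF assms] by auto
  have "gamma t r = x" unfolding gamma_def
    using x uniq[OF assms] by (intro the_equality) auto
  then show ?thesis using x by simp
qed

lemma gamma_dec:
  assumes "1 \<le> t" "t \<le> 2.13" "4.999 \<le> r1" "r1 < r2" "r2 \<le> 5"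
  shows "gamma t r2 < gamma t r1"
proof -
  have A1: "4.999 \<le> r1" "r1 \<le> 5" and A2: "4.999 \<le> r2" "r2 \<le> 5" using assms by auto
  have g1: "gamma t r1 \<in> {0<..<0.56}" "qpoly t r1 (gamma t r1) = 0"
    using gamma_prop[OF assms(1,2) A1] by auto
  define y where "y = gamma t r1"
  have "qpoly t r2 y = qpoly t r1 y - (r2 - r1) * (y * (1 - y))"
    unfolding qpoly_def by (simp add: algebra_simps power2_eq_square)
  moreover have "(r2 - r1) * (y * (1 - y)) > 0" using g1 assms unfolding y_def by auto
  ultimately have neg: "qpoly t r2 y < 0" using g1 unfolding y_def by simp
  obtain x where x: "x \<in> {0<..<y}" "qpoly t r2 x = 0"
    using root_below[OF assms(1,2) A2, of y] neg g1 unfolding y_def by auto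
  have "x = gamma t r2"
    using uniq[OF assms(1,2) A2, of x "gamma t r2"] gamma_prop[OF assms(1,2) A2] x g1
    unfolding y_def by auto
  then show ?thesis using x unfolding y_def by auto
qed

theorem mainTheorem9:
  fixes \<theta> :: real
  assumes "1 \<le> \<theta>" and "\<theta> \<le> 2.13"
  shows "(\<forall>r\<in>{4.999..5}. \<exists>!x. x \<in> {0<..<0.56} \<and> qpoly \<theta> r x = 0)
    \<and> strict_antimono_on {4.999..5::real} (gamma \<theta>)
    \<and> strict_antimono_on {4.999..5::real} (\<lambda>r. 1 / (1 - gamma \<theta> r) - \<theta>)"
proof (intro conjI ballI)
  fix r :: real assume r: "r \<in> {4.999..5}"
  then have r1: "4.999 \<le> r" "r \<le> 5" by auto
  show "\<exists>!x. x \<in> {0<..<0.56} \<and> qpoly \<theta> r x = 0"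
    using gamma_prop[OF assms r1] uniq[OF assms r1] by blast
next
  show "strict_antimono_on {4.999..5::real} (gamma \<theta>)"
    unfolding monotone_on_def using gamma_dec[OF assms] by auto
next
  show "strict_antimono_on {4.999..5::real} (\<lambda>r. 1 / (1 - gamma \<theta> r) - \<theta>)"
    unfolding monotone_on_def
  proof (intro ballI impI)
    fix a b :: real assume a: "a \<in> {4.999..5}" and b: "b \<in> {4.999..5}" and ab: "a < b"
    have d: "gamma \<theta> b < gamma \<theta> a" using gamma_dec[OF assms] a b ab by auto
    have ga: "gamma \<theta> a < 0.56" "gamma \<theta> b > 0" using gamma_prop[OF assms] a b by auto
    have "1 / (1 - gamma \<theta> b) < 1 / (1 - gamma \<theta> a)"
      using d ga by (intro divide_strict_left_mono) auto
    then show "1 / (1 - gamma \<theta> a) - \<theta> > 1 / (1 - gamma \<theta> b) - \<theta>" by simp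
  qed
qed

end
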